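(* There is an absolute constant $c>0$ such that the following holds. Let $F:\mathbb{R}\to\mathbb{R}$ be a strictly convex function, and let $A,B,C$ be finite sets of real numbers with $|A|=|B|=|C|=k$. Then \[ \max\{|A+B|,\ |F(A)+C|\}\ge c\,k^{5/4}. \] In particular, $|A+F(A)|\ge c\,k^{5/4}$ for every finite $A\subset\mathbb{R}$ with $|A|=k$.
   Context: $F(A)=\{F(a):a\in A\}$; for finite $X,Y\subset\mathbb{R}$, $X+Y=\{x+y:x\in X,y\in Y\}$. *)

theory Defs
  imports "HOL-Analysis.Analysis"
begin

definition strictly_convex :: "(real \<Rightarrow> real) \<Rightarrow> bool" where
  "strictly_convex F \<longleftrightarrow>
     (\<forall>x y t. x \<noteq> y \<and> 0 < t \<and> t < 1 \<longrightarrow>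
        F ((1 - t) * x + t * y) < (1 - t) * F x + t * F y)"

definition sumset :: "real set \<Rightarrow> real set \<Rightarrow> real set" where
  "sumset X Y = {x + y | x y. x \<in> X \<and> y \<in> Y}"

end

theory Submission
  imports Defs
begin


lemma conv_mid:
  assumes sc: "strictly_convex F" and xy: "x < y" and yz: "y < (z::real)"
  shows "(z - x) * F y < (z - y) * F x + (y - x) * F z"
proof -
  define t where "t = (y - x) / (z - x)"
  have t0: "0 < t" and t1: "t < 1" using xy yz by (auto simp: t_def field_simps)
  have tz: "t * (z - x) = y - x" using xy yz by (simp add: t_def)
  have ty: "(1 - t) * x + t * z = y" using tz by (simp add: algebra_simps)
  have "F ((1 - t) * x + t * z) < (1 - t) * F x + t * F z"
    using sc t0 t1 xy yz unfolding strictly_convex_def by auto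
  hence "F y < (1 - t) * F x + t * F z" using ty by simp
  hence "(z - x) * F y < (z - x) * ((1 - t) * F x + t * F z)"
    using xy yz by simp
  also have "(z - x) * ((1 - t) * F x + t * F z) = (z-x)*F x - (t*(z-x))*F x + (t*(z-x))*F z"
    by (simp add: algebra_simps)
  also have "\<dots> = (z - y) * F x + (y - x) * F z" unfolding tz by (simp add: algebra_simps)
  finally show ?thesis .
qed

lemma conv_L1:
  assumes "strictly_convex F" "x < y" "y < (z::real)" "F x \<le> F y"
  shows "F y < F z"
proof -
  have "(z - x) * F y < (z - y) * F x + (y - x) * F z" using conv_mid assms by blast
  moreover have "(z - y) * F x \<le> (z - y) * F y" using assms by simp
  ultimately have "(y - x) * F y < (y - x) * F z" by (simp add: algebra_simps)
  thus ?thesis using assms by simp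
qed

lemma conv_L2:
  assumes "strictly_convex F" "x < y" "y < (z::real)" "F z \<le> F y"
  shows "F y < F x"
proof -
  have "(z - x) * F y < (z - y) * F x + (y - x) * F z" using conv_mid assms by blast
  moreover have "(y - x) * F z \<le> (y - x) * F y" using assms by simp
  ultimately have "(z - y) * F y < (z - y) * F x" by (simp add: algebra_simps)
  thus ?thesis using assms by simp
qed

lemma conv_slope:
  assumes "strictly_convex F" "x < y" "y < (z::real)"
  shows "(F y - F x) / (y - x) < (F z - F y) / (z - y)"
proof -
  have "(z - x) * F y < (z - y) * F x + (y - x) * F z" using conv_mid assms by blast
  hence "(F y - F x) * (z - y) < (F z - F y) * (y - x)" by (simp add: algebra_simps)
  have p: "0 < (y - x) * (z - y)" using assms by simp
  have e1: "(F y - F x)/(y-x) = (F y - F x)*(z-y)/((y-x)*(z-y))" using assms by simp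
  have e2: "(F z - F y)/(z-y) = (F z - F y)*(y-x)/((y-x)*(z-y))" using assms by simp
  show ?thesis unfolding e1 e2 using divide_strict_right_mono[OF \<open>(F y - F x) * (z - y) < (F z - F y) * (y - x)\<close> p] .
qed

lemma count_unique:
  assumes "finite S" "z1 \<in> S" "z2 \<in> S" "x0 \<le> z1" "x0 \<le> z2"
    "card {s\<in>S. x0 \<le> s \<and> s < z1} = card {s\<in>S. x0 \<le> s \<and> s < (z2::real)}"
  shows "z1 = z2"
proof (rule ccontr)
  assume ne: "z1 \<noteq> z2"
  have "\<And>u v. u \<in> S \<Longrightarrow> v \<in> S \<Longrightarrow> x0 \<le> u \<Longrightarrow> u < v \<Longrightarrow>
     card {s\<in>S. x0 \<le> s \<and> s < u} < card {s\<in>S. x0 \<le> s \<and> s < v}"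
  proof -
    fix u v assume h: "u \<in> S" "v \<in> S" "x0 \<le> u" "u < v"
    have "{s\<in>S. x0 \<le> s \<and> s < u} \<subset> {s\<in>S. x0 \<le> s \<and> s < v}"
      using h by auto
    thus "card {s\<in>S. x0 \<le> s \<and> s < u} < card {s\<in>S. x0 \<le> s \<and> s < v}"
      using assms(1) by (intro psubset_card_mono) auto
  qed
  note key = this
  show False
  proof (cases "z1 < z2")
    case True
    from key[OF assms(2,3,4) True] assms(6) show False by simp
  next
    case False
    hence "z2 < z1" using ne by simp
    from key[OF assms(3,2,5) this] assms(6) show False by simp
  qed
qed

lemma disjoint_intervals_sum:
  assumes "finite S" "finite I"
    "\<And>i j. i \<in> I \<Longrightarrow> j \<in> I \<Longrightarrow> i \<noteq> j \<Longrightarrow> h i \<le> l j \<or> h j \<le> (l i::real)"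
  shows "(\<Sum>i\<in>I. card {s\<in>S. l i \<le> s \<and> s < h i}) \<le> card S"
proof -
  have "(\<Sum>i\<in>I. card {s\<in>S. l i \<le> s \<and> s < h i}) = card (\<Union>i\<in>I. {s\<in>S. l i \<le> s \<and> s < h i})"
    using assms by (subst card_UN_disjoint) (fastforce+)
  also have "\<dots> \<le> card S" using assms(1) by (intro card_mono) auto
  finally show ?thesis .
qed



lemma count_main:
  fixes F :: "real \<Rightarrow> real" and a :: "nat \<Rightarrow> real" and M :: nat
  assumes sc: "strictly_convex F"
  and amono: "\<And>i j. i < j \<Longrightarrow> j < k \<Longrightarrow> a i < a j"
  and fX: "finite X" and fY: "finite Y" and fB: "finite B" and fC: "finite C"
  and inX: "\<And>i b. i < k \<Longrightarrow> b \<in> B \<Longrightarrow> a i + b \<in> X"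
  and inY: "\<And>i c. i < k \<Longrightarrow> c \<in> C \<Longrightarrow> F (a i) + c \<in> Y"
  shows "M * ((k-1) * card B * card C) \<le> M * (card X * (M+1) * card Y * (M+1) * 2)
           + (card X + 2 * card Y) * card B * card C"
proof -
  define m1 where "m1 i b = card {x\<in>X. a i + b \<le> x \<and> x < a (Suc i) + b}" for i b
  define lo where "lo i c = min (F (a i)) (F (a (Suc i))) + c" for i c
  define hi where "hi i c = max (F (a i)) (F (a (Suc i))) + c" for i c
  define m2 where "m2 i c = card {y\<in>Y. lo i c \<le> y \<and> y < hi i c}" for i c
  define I where "I = {..<k-1}"
  define T where "T = B \<times> C \<times> I"
  define f1 where "f1 = (\<lambda>(b::real,c::real,i::nat). m1 i b)"
  define f2 where "f2 = (\<lambda>(b::real,c::real,i::nat). m2 i c)"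
  define G where "G = {t\<in>T. f1 t \<le> M \<and> f2 t \<le> M}"
  define \<phi> where "\<phi> = (\<lambda>(b::real,c::real,i::nat). (a i + b, m1 i b, lo i c, m2 i c, F (a i) \<le> F (a (Suc i))))"
  have fT: "finite T" using fB fC by (simp add: T_def I_def)
  have amono': "\<And>i j. i \<le> j \<Longrightarrow> j < k \<Longrightarrow> a i \<le> a j"
    using amono by (metis order_le_less order_refl)
  have S1: "(\<Sum>t\<in>T. f1 t) \<le> card X * card B * card C"
  proof -
    have "(\<Sum>t\<in>T. f1 t) = (\<Sum>b\<in>B. \<Sum>c\<in>C. \<Sum>i\<in>I. m1 i b)"
      unfolding T_def f1_def sum.cartesian_product[symmetric] by simp
    also have "\<dots> \<le> (\<Sum>b\<in>B. \<Sum>c\<in>C. card X)"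
    proof (intro sum_mono)
      fix b c
      show "(\<Sum>i\<in>I. m1 i b) \<le> card X"
        unfolding m1_def
      proof (rule disjoint_intervals_sum[OF fX])
        show "finite I" by (simp add: I_def)
        fix i j assume ij: "i \<in> I" "j \<in> I" "i \<noteq> j"
        show "a (Suc i) + b \<le> a j + b \<or> a (Suc j) + b \<le> a i + b"
        proof (cases "i < j")
          case True then show ?thesis using amono'[of "Suc i" j] ij by (auto simp: I_def)
        next
          case False then have "j < i" using ij by simp
          then show ?thesis using amono'[of "Suc j" i] ij by (auto simp: I_def)
        qed
      qed
    qed
    also have "\<dots> = card X * card B * card C" by simp
    finally show ?thesis .
  qed
  have S2: "(\<Sum>t\<in>T. f2 t) \<le> 2 * card Y * card B * card C"
  proof -
    have "(\<Sum>t\<in>T. f2 t) = (\<Sum>b\<in>B. \<Sum>c\<in>C. \<Sum>i\<in>I. m2 i c)"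
      unfolding T_def f2_def sum.cartesian_product[symmetric] by simp
    also have "\<dots> \<le> (\<Sum>b\<in>B. \<Sum>c\<in>C. 2 * card Y)"
    proof (intro sum_mono)
      fix b c
      define P where "P = {i\<in>I. F (a i) \<le> F (a (Suc i))}"
      define Q where "Q = {i\<in>I. \<not> F (a i) \<le> F (a (Suc i))}"
      have IPQ: "I = P \<union> Q" "P \<inter> Q = {}" "finite P" "finite Q"
        by (auto simp: P_def Q_def I_def)
      have "(\<Sum>i\<in>I. m2 i c) = (\<Sum>i\<in>P. m2 i c) + (\<Sum>i\<in>Q. m2 i c)"
        using IPQ by (simp add: sum.union_disjoint)
      also have "(\<Sum>i\<in>P. m2 i c) \<le> card Y"
        unfolding m2_def
      proof (rule disjoint_intervals_sum[OF fY IPQ(3)])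
        have *: "hi i c \<le> lo j c" if ij: "i \<in> P" "j \<in> P" "i < j" for i j
        proof -
          have "F (a (Suc i)) \<le> F (a j)"
          proof (cases "Suc i = j")
            case True then show ?thesis by simp
          next
            case False
            then have "Suc i < j" using ij by simp
            moreover have "j < k" using ij by (auto simp: P_def I_def)
            ultimately show ?thesis
              using conv_L1[OF sc, of "a i" "a (Suc i)" "a j"] amono[of i "Suc i"] amono[of "Suc i" j] ij
              by (auto simp: P_def)
          qed
          then show ?thesis using ij by (auto simp: hi_def lo_def P_def)
        qed
        fix i j assume ij: "i \<in> P" "j \<in> P" "i \<noteq> j"
        show "hi i c \<le> lo j c \<or> hi j c \<le> lo i c"
          using *[of i j] *[of j i] ij by (cases "i < j") auto
      qed
      also have "(\<Sum>i\<in>Q. m2 i c) \<le> card Y"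
        unfolding m2_def
      proof (rule disjoint_intervals_sum[OF fY IPQ(4)])
        have *: "hi j c \<le> lo i c" if ij: "i \<in> Q" "j \<in> Q" "i < j" for i j
        proof -
          have "F (a j) \<le> F (a (Suc i))"
          proof (cases "Suc i = j")
            case True then show ?thesis by simp
          next
            case False
            then have "Suc i < j" using ij by simp
            moreover have "Suc j < k" using ij by (auto simp: Q_def I_def)
            ultimately show ?thesis
              using conv_L2[OF sc, of "a (Suc i)" "a j" "a (Suc j)"] amono[of "Suc i" j] amono[of j "Suc j"] ij
              by (auto simp: Q_def)
          qed
          then show ?thesis using ij by (auto simp: hi_def lo_def Q_def)
        qed
        fix i j assume ij: "i \<in> Q" "j \<in> Q" "i \<noteq> j"
        show "hi i c \<le> lo j c \<or> hi j c \<le> lo i c"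
          using *[of i j] *[of j i] ij by (cases "i < j") auto
      qed
      finally show "(\<Sum>i\<in>I. m2 i c) \<le> 2 * card Y" by simp
    qed
    also have "\<dots> = 2 * card Y * card B * card C" by simp
    finally show ?thesis .
  qed
  have S3: "M * card (T - G) \<le> (card X + 2 * card Y) * card B * card C"
  proof -
    have "M * card (T - G) = (\<Sum>t\<in>T - G. M)" by simp
    also have "\<dots> \<le> (\<Sum>t\<in>T - G. f1 t + f2 t)"
      by (intro sum_mono) (auto simp: G_def)
    also have "\<dots> \<le> (\<Sum>t\<in>T. f1 t + f2 t)"
      using fT by (intro sum_mono2) auto
    also have "\<dots> = (\<Sum>t\<in>T. f1 t) + (\<Sum>t\<in>T. f2 t)" by (simp add: sum.distrib)
    also have "\<dots> \<le> (card X + 2 * card Y) * card B * card C"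
      using S1 S2 by (simp add: algebra_simps)
    finally show ?thesis .
  qed
  define s where "s i = (F (a (Suc i)) - F (a i)) / (a (Suc i) - a i)" for i
  have smono: "s i < s j" if "i < j" "j < k - 1" for i j
    using that
  proof (induction j)
    case 0 then show ?case by simp
  next
    case (Suc j)
    have step: "s j < s (Suc j)"
      unfolding s_def
      using conv_slope[OF sc, of "a j" "a (Suc j)" "a (Suc (Suc j))"] amono[of j "Suc j"]
        amono[of "Suc j" "Suc (Suc j)"] Suc.prems by simp
    show ?case
    proof (cases "i = j")
      case True then show ?thesis using step by simp
    next
      case False
      then have "s i < s j" using Suc by simp
      then show ?thesis using step by simp
    qed
  qed
  have S4: "card G \<le> card X * (M+1) * card Y * (M+1) * 2"
  proof -
    have inj: "inj_on \<phi> G"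
    proof (rule inj_onI)
      fix t t' assume tG: "t \<in> G" "t' \<in> G" and eq: "\<phi> t = \<phi> t'"
      obtain b c i where t: "t = (b,c,i)" by (cases t) auto
      obtain b' c' j where t': "t' = (b',c',j)" by (cases t') auto
      have ik: "i < k - 1" "j < k - 1" "b \<in> B" "b' \<in> B" "c \<in> C" "c' \<in> C"
        using tG by (auto simp: t t' G_def T_def I_def)
      have x0: "a i + b = a j + b'" and m1e: "m1 i b = m1 j b'" and loe: "lo i c = lo j c'"
        and m2e: "m2 i c = m2 j c'" and sg: "(F (a i) \<le> F (a (Suc i))) = (F (a j) \<le> F (a (Suc j)))"
        using eq by (auto simp: \<phi>_def t t')
      have ai: "a i < a (Suc i)" "a j < a (Suc j)" using amono ik by auto
      have "a (Suc i) + b = a (Suc j) + b'"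
      proof (rule count_unique[OF fX, of _ _ "a i + b"])
        show "a (Suc i) + b \<in> X" "a (Suc j) + b' \<in> X" using inX ik by auto
        show "a i + b \<le> a (Suc i) + b" "a i + b \<le> a (Suc j) + b'" using ai x0 by auto
        show "card {s \<in> X. a i + b \<le> s \<and> s < a (Suc i) + b} =
              card {s \<in> X. a i + b \<le> s \<and> s < a (Suc j) + b'}"
          using m1e x0 by (simp add: m1_def)
      qed
      then have de: "a (Suc i) - a i = a (Suc j) - a j" using x0 by simp
      have loY: "lo i c \<in> Y" using inY ik by (simp add: lo_def min_def)
      have "hi i c = hi j c'"
      proof (rule count_unique[OF fY, of _ _ "lo i c"])
        show "hi i c \<in> Y" "hi j c' \<in> Y" using inY ik by (auto simp: hi_def max_def)
        show "lo i c \<le> hi i c" "lo i c \<le> hi j c'" using loe by (auto simp: lo_def hi_def)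
        show "card {s \<in> Y. lo i c \<le> s \<and> s < hi i c} = card {s \<in> Y. lo i c \<le> s \<and> s < hi j c'}"
          using m2e loe by (simp add: m2_def)
      qed
      then have "F (a (Suc i)) - F (a i) = F (a (Suc j)) - F (a j)"
        using loe sg by (auto simp: lo_def hi_def min_def max_def split: if_splits)
      then have "s i = s j" using de by (simp add: s_def)
      then have "i = j" using smono[of i j] smono[of j i] ik by (cases "i < j"; cases "j < i") auto
      then show "t = t'" using x0 loe by (simp add: t t' lo_def)
    qed
    have sub: "\<phi> ` G \<subseteq> X \<times> {..M} \<times> Y \<times> {..M} \<times> (UNIV :: bool set)"
    proof
      fix u assume "u \<in> \<phi> ` G"
      then obtain b c i where g: "(b,c,i) \<in> G" and u: "u = \<phi> (b,c,i)" by auto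
      have ik: "i < k - 1" "b \<in> B" "c \<in> C" "m1 i b \<le> M" "m2 i c \<le> M"
        using g by (auto simp: G_def T_def I_def f1_def f2_def)
      have "lo i c \<in> Y" using inY ik by (simp add: lo_def min_def)
      then show "u \<in> X \<times> {..M} \<times> Y \<times> {..M} \<times> (UNIV :: bool set)"
        using ik inX[of i b] by (simp add: u \<phi>_def)
    qed
    have "card G \<le> card (X \<times> {..M} \<times> Y \<times> {..M} \<times> (UNIV :: bool set))"
      using fX fY by (intro card_inj_on_le[OF inj sub]) auto
    also have "\<dots> = card X * card {..M} * card Y * card {..M} * card (UNIV::bool set)"
      unfolding card_cartesian_product by (simp only: mult.assoc)
    also have "\<dots> = card X * (M+1) * card Y * (M+1) * 2"
      by (simp only: card_atMost card_UNIV_bool Suc_eq_plus1)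
    finally show ?thesis .
  qed
  have GT: "G \<subseteq> T" by (auto simp: G_def)
  have cD: "card (T - G) = card T - card G" using GT fT by (simp add: card_Diff_subset finite_subset)
  have cle: "card G \<le> card T" by (rule card_mono[OF fT GT])
  have cT: "card T = card G + card (T - G)" using cD cle by simp
  have "card T = (k-1) * card B * card C"
    by (simp add: T_def I_def card_cartesian_product)
  then have "M * ((k-1) * card B * card C) = M * card T" by simp
  also have "\<dots> = M * card G + M * card (T - G)"
    using cT by (simp add: add_mult_distrib2)
  also have "\<dots> \<le> M * (card X * (M+1) * card Y * (M+1) * 2) + (card X + 2 * card Y) * card B * card C"
    using S3 S4 by (intro add_mono mult_le_mono2) auto
  finally show ?thesis .
qed



lemma finite_sumset: "finite X \<Longrightarrow> finite Y \<Longrightarrow> finite (sumset X Y)"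
proof -
  assume "finite X" "finite Y"
  moreover have "sumset X Y = (\<lambda>(x,y). x + y) ` (X \<times> Y)" by (auto simp: sumset_def)
  ultimately show ?thesis by simp
qed

lemma arith_final:
  fixes r m N K :: real
  assumes r1: "1 \<le> r" and K: "K = r^4" and K2: "2 \<le> K" and m1: "1 \<le> m" and mr: "m \<le> r" and mr2: "r \<le> 2*m"
    and N0: "0 \<le> N"
    and main: "m * ((K - 1) * K * K) \<le> 2 * m * N^2 * (m+1)^2 + 3 * N * K * K"
  shows "r^5 / 20 \<le> N"
proof (rule ccontr)
  assume "\<not> r^5 / 20 \<le> N"
  hence Nl: "N < r^5/20" by simp
  have rp: "0 < r" using r1 by simp
  have Kp: "0 < K" using K2 by simp
  have h1: "N^2 \<le> (r^5/20)^2" using Nl N0 by (intro power_mono) auto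
  have h2: "(m+1)^2 \<le> (2*r)^2" using m1 mr by (intro power_mono) auto
  have "2 * m * N^2 * (m+1)^2 \<le> 2 * r * (r^5/20)^2 * (2*r)^2"
    using h1 h2 mr m1 by (intro mult_mono) (auto intro!: mult_mono)
  also have "\<dots> = r^13 / 50" by (simp add: field_simps) algebra
  finally have A: "2 * m * N^2 * (m+1)^2 \<le> r^13 / 50" .
  have "3 * N * K * K < 3 * (r^5/20) * K * K" using Nl Kp by simp
  also have "\<dots> = 3 * r^13 / 20" using K by (simp add: field_simps)
  finally have B: "3 * N * K * K < 3 * r^13 / 20" .
  have "(r/2) * ((K/2) * K * K) \<le> m * ((K - 1) * K * K)"
    using mr2 K2 Kp m1 by (intro mult_mono) auto
  moreover have "(r/2) * ((K/2) * K * K) = r^13/4" unfolding K by (simp add: field_simps) algebra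
  ultimately have "r^13/4 < r^13/50 + 3 * r^13/20" using main A B by linarith
  moreover have "0 < r^13" using rp by simp
  ultimately show False by simp
qed

lemma core:
  fixes F :: "real \<Rightarrow> real"
  assumes sc: "strictly_convex F" and fA: "finite A" and fB: "finite B" and fC: "finite C"
    and cA: "card A = k" and cB: "card B = k" and cC: "card C = k" and k2: "2 \<le> k"
  shows "real k powr (5/4) / 20 \<le> real (max (card (sumset A B)) (card (sumset (F ` A) C)))"
proof -
  define X where "X = sumset A B"
  define Y where "Y = sumset (F ` A) C"
  have fX: "finite X" and fY: "finite Y" using fA fB fC by (auto simp: X_def Y_def finite_sumset)
  obtain xs where xs: "sorted_wrt (<) xs" "set xs = A"
    using ex1_sorted_list_for_set_if_finite[OF fA] by blast
  have lxs: "length xs = k"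
    using xs cA by (metis distinct_card strict_sorted_iff)
  define a where "a i = xs ! i" for i
  have amono: "\<And>i j. i < j \<Longrightarrow> j < k \<Longrightarrow> a i < a j"
    using sorted_wrt_nth_less[OF xs(1)] lxs by (auto simp: a_def)
  have aA: "\<And>i. i < k \<Longrightarrow> a i \<in> A" using xs lxs by (auto simp: a_def)
  have inX: "\<And>i b. i < k \<Longrightarrow> b \<in> B \<Longrightarrow> a i + b \<in> X"
    using aA by (auto simp: X_def sumset_def)
  have inY: "\<And>i c. i < k \<Longrightarrow> c \<in> C \<Longrightarrow> F (a i) + c \<in> Y"
    using aA by (auto simp: Y_def sumset_def)
  define r where "r = real k powr (1/4)"
  have kpos: "0 < real k" using k2 by simp
  have K: "real k = r^4" unfolding r_def using kpos by (simp add: powr_power)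
  have r5: "real k powr (5/4) = r^5" unfolding r_def using kpos by (simp add: powr_power)
  have r1: "1 \<le> r" unfolding r_def using k2 by (intro ge_one_powr_ge_zero) auto
  define M where "M = nat \<lfloor>r\<rfloor>"
  have Mr: "real M \<le> r" using r1 by (simp add: M_def)
  have M1: "1 \<le> real M" using r1 by (simp add: M_def)
  have Mr2: "r < real M + 1" using r1 by (simp add: M_def)
  note nat_main = count_main[where M=M and k=k and a=a and F=F and X=X and Y=Y and B=B and C=C, OF sc amono fX fY fB fC inX inY]
  define N where "N = real (max (card X) (card Y))"
  have NX: "real (card X) \<le> N" and NY: "real (card Y) \<le> N" by (auto simp: N_def)
  have N0: "0 \<le> N" by (simp add: N_def)
  have real_main: "real M * ((real k - 1) * real k * real k) \<le>
      real M * (real (card X) * (real M + 1) * real (card Y) * (real M + 1) * 2)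
      + (real (card X) + 2 * real (card Y)) * real k * real k"
  proof -
    have "real (M * ((k-1) * card B * card C)) \<le> real (M * (card X * (M+1) * card Y * (M+1) * 2)
           + (card X + 2 * card Y) * card B * card C)"
      using nat_main by (simp only: of_nat_le_iff)
    then show ?thesis using k2 cB cC by (simp add: of_nat_diff algebra_simps)
  qed
  have "real (card X) * real (card Y) \<le> N * N"
    using NX NY by (intro mult_mono) auto
  hence "real M * (real (card X) * (real M + 1) * real (card Y) * (real M + 1) * 2)
        \<le> 2 * real M * N^2 * (real M + 1)^2"
    using M1 by (simp add: power2_eq_square mult_ac mult_left_mono)
  moreover have "(real (card X) + 2 * real (card Y)) * real k * real k \<le> 3 * N * real k * real k"
    using NX NY by (intro mult_right_mono) auto
  ultimately have main: "real M * ((real k - 1) * real k * real k) \<le> 2 * real M * N^2 * (real M + 1)^2 + 3 * N * real k * real k"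
    using real_main by linarith
  have "r^5/20 \<le> N"
    by (rule arith_final[OF r1 K _ M1 Mr _ N0 main]) (use k2 Mr2 M1 in auto)
  then show ?thesis unfolding r5 N_def X_def Y_def .
qed



lemma fiber_bound:
  assumes sc: "strictly_convex F" and fA: "finite A"
  shows "card A \<le> 2 * card (F ` A)"
proof -
  have fib: "card {x\<in>A. F x = y} \<le> 2" for y
  proof (rule ccontr)
    define S where "S = {x\<in>A. F x = y}"
    assume "\<not> card {x\<in>A. F x = y} \<le> 2"
    hence c3: "3 \<le> card S" by (simp add: S_def)
    have fS: "finite S" using fA by (simp add: S_def)
    have ne: "S \<noteq> {}" using c3 by auto
    define x where "x = Min S"
    define z where "z = Max S"
    have xS: "x \<in> S" and zS: "z \<in> S" using fS ne by (auto simp: x_def z_def)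
    have "card (S - {x, z}) \<ge> 1"
    proof -
      have "card S - card {x,z} \<le> card (S - {x,z})"
        by (rule diff_card_le_card_Diff) simp
      moreover have "card {x,z} \<le> 2" by (simp add: card_insert_if)
      ultimately show ?thesis using c3 by linarith
    qed
    hence "S - {x, z} \<noteq> {}" by (metis card.empty not_one_le_zero)
    then obtain w where w: "w \<in> S" "w \<noteq> x" "w \<noteq> z" by auto
    have "x \<le> w" "w \<le> z" using fS w by (auto simp: x_def z_def)
    hence xw: "x < w" "w < z" using w by auto
    have Fe: "F x = y" "F w = y" "F z = y" using xS zS w by (auto simp: S_def)
    show False using conv_L1[OF sc xw] Fe by simp
  qed
  have "A = (\<Union>y\<in>F ` A. {x\<in>A. F x = y})" by auto
  hence "card A = card (\<Union>y\<in>F ` A. {x\<in>A. F x = y})" by simp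
  also have "\<dots> \<le> (\<Sum>y\<in>F ` A. card {x\<in>A. F x = y})" using fA by (intro card_UN_le) auto
  also have "\<dots> \<le> (\<Sum>y\<in>F ` A. 2)" by (intro sum_mono fib)
  finally show ?thesis by simp
qed

lemma sumset_comm: "sumset X Y = sumset Y X"
  unfolding sumset_def using add.commute by blast

theorem theorem4:
  shows "\<exists>c::real. c > 0 \<and>
    (\<forall>(F::real \<Rightarrow> real) (A::real set) (B::real set) (C::real set) (k::nat).
       strictly_convex F \<longrightarrow> finite A \<longrightarrow> finite B \<longrightarrow> finite C \<longrightarrow>
       card A = k \<longrightarrow> card B = k \<longrightarrow> card C = k \<longrightarrow>
       real (max (card (sumset A B)) (card (sumset (F ` A) C))) \<ge> c * real k powr (5/4))
    \<and> (\<exists>c'::real. c' > 0 \<and> (\<forall>(F::real \<Rightarrow> real) (A::real set) (k::nat).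
       strictly_convex F \<longrightarrow> finite A \<longrightarrow> card A = k \<longrightarrow>
       real (card (sumset A (F ` A))) \<ge> c' * real k powr (5/4)))"
proof -
  have P1: "real (max (card (sumset A B)) (card (sumset (F ` A) C))) \<ge> 1/20 * real k powr (5/4)"
    if sc: "strictly_convex F" and fA: "finite A" and fB: "finite B" and fC: "finite C"
      and cA: "card A = k" and cB: "card B = k" and cC: "card C = k" for F A B C k
  proof (cases "k \<ge> 2")
    case True
    from core[OF sc fA fB fC cA cB cC True] show ?thesis by simp
  next
    case False
    then consider "k = 0" | "k = 1" by linarith
    then show ?thesis
    proof cases
      case 1 then show ?thesis by simp
    next
      case 2
      have "A \<noteq> {}" using cA 2 by auto
      then obtain a where "a \<in> A" by auto
      moreover have "B \<noteq> {}" using cB 2 by auto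
      then obtain b where "b \<in> B" by auto
      ultimately have "a + b \<in> sumset A B" by (auto simp: sumset_def)
      hence "sumset A B \<noteq> {}" by auto
      hence "1 \<le> card (sumset A B)" using finite_sumset[OF fA fB] by (simp add: Suc_le_eq card_gt_0_iff)
      hence "1 \<le> real (max (card (sumset A B)) (card (sumset (F ` A) C)))" by linarith
      then show ?thesis using 2 by simp
    qed
  qed
  have P2: "real (card (sumset A (F ` A))) \<ge> 1/80 * real k powr (5/4)"
    if sc: "strictly_convex F" and fA: "finite A" and cA: "card A = k" for F A k
  proof -
    define g where "g y = (SOME x. x \<in> A \<and> F x = y)" for y
    have g: "g y \<in> A \<and> F (g y) = y" if "y \<in> F ` A" for y
    proof -
      have "\<exists>x. x \<in> A \<and> F x = y" using that by auto
      then show ?thesis unfolding g_def by (rule someI_ex[of "\<lambda>x. x \<in> A \<and> F x = y"])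
    qed
    define A' where "A' = g ` (F ` A)"
    have A'A: "A' \<subseteq> A" using g by (auto simp: A'_def)
    have fA': "finite A'" using fA by (simp add: A'_def)
    have FA': "F ` A' = F ` A"
    proof
      show "F ` A' \<subseteq> F ` A" using A'A by auto
      show "F ` A \<subseteq> F ` A'"
      proof
        fix y assume y: "y \<in> F ` A"
        then have "F (g y) = y" "g y \<in> A'" using g by (auto simp: A'_def)
        then show "y \<in> F ` A'" by (rule_tac image_eqI[where x="g y"]) simp_all
      qed
    qed
    have injF: "inj_on F A'" using g by (auto simp: A'_def inj_on_def)
    have injg: "inj_on g (F ` A)" by (rule inj_on_inverseI[where g = F]) (use g in auto)
    define k' where "k' = card A'"
    have ck': "card (F ` A) = k'" using injg by (simp add: k'_def A'_def card_image)
    have k2: "real k \<le> 2 * real k'" using fiber_bound[OF sc fA] ck' cA by linarith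
    have "1/20 * real k' powr (5/4) \<le> real (max (card (sumset A' (F ` A'))) (card (sumset (F ` A') A')))"
    proof -
      have cF: "card (F ` A') = k'" using injF by (simp add: card_image k'_def)
      have ff: "finite (F ` A')" using fA' by simp
      have cA': "card A' = k'" by (simp add: k'_def)
      show ?thesis by (rule P1[OF sc fA' ff fA' cA' cF cA'])
    qed
    also have "\<dots> = real (card (sumset A' (F ` A')))" by (simp only: sumset_comm[of "F ` A'" A'] max.idem)
    also have "\<dots> \<le> real (card (sumset A (F ` A)))"
    proof -
      have "sumset A' (F ` A') = sumset A' (F ` A)" by (simp only: FA')
      also have "\<dots> \<subseteq> sumset A (F ` A)" using A'A unfolding sumset_def by blast
      finally have "sumset A' (F ` A') \<subseteq> sumset A (F ` A)" .
      then show ?thesis using fA by (simp add: card_mono finite_sumset)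
    qed
    finally have h: "1/20 * real k' powr (5/4) \<le> real (card (sumset A (F ` A)))" .
    have "real k powr (5/4) \<le> (2 * real k') powr (5/4)" using k2 by (intro powr_mono2) auto
    also have "\<dots> = 2 powr (5/4) * real k' powr (5/4)" by (simp add: powr_mult)
    also have "\<dots> \<le> 4 * real k' powr (5/4)"
    proof (intro mult_right_mono)
      have "(2::real) powr (5/4) \<le> 2 powr 2" by (intro powr_mono) auto
      moreover have "(2::real) powr 2 = 4" by (simp add: powr_numeral)
      ultimately show "(2::real) powr (5/4) \<le> 4" by simp
    qed auto
    finally have "real k powr (5/4) \<le> 4 * real k' powr (5/4)" .
    then show ?thesis using h by linarith
  qed
  show ?thesis
  proof (rule exI[of _ "1/20"], intro conjI)
    show "(0::real) < 1/20" by simp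
    show "\<exists>c'::real. c' > 0 \<and> (\<forall>(F::real \<Rightarrow> real) (A::real set) (k::nat).
       strictly_convex F \<longrightarrow> finite A \<longrightarrow> card A = k \<longrightarrow>
       real (card (sumset A (F ` A))) \<ge> c' * real k powr (5/4))"
    proof (rule exI[of _ "1/80"], intro conjI allI impI)
      show "(0::real) < 1/80" by simp
      fix F :: "real \<Rightarrow> real" and A :: "real set" and k :: nat
      assume "strictly_convex F" "finite A" "card A = k"
      then show "1/80 * real k powr (5/4) \<le> real (card (sumset A (F ` A)))" by (rule P2)
    qed
  qed (use P1 in blast)
qed

end
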